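(* In the model described in the context, with $\tilde k(p)=(1+\theta)p+\alpha(p-p^2)$ for $\theta\ge0$ and $\alpha\ge0$, the indemnity $I\equiv0$ is never optimal.
   Context: Let $X\ge0$ be a random variable with $\mathbb{P}(X=0)=1-q$, where $q\in(0,1]$, and with density $q\lambda e^{-\lambda x}$ on $(0,\infty)$, where $\lambda>0$. So $S_X(t)=qe^{-\lambda t}$ for $t\ge0$. $\mathcal{I}_c$ is the set of $I:[0,\infty)\to[0,\infty)$ with $0\le I(x)\le x$ and $0\le I(x)-I(y)\le x-y$ for $0\le y\le x$. For $Y\ge0$ with $S_Y(t)=\mathbb{P}(Y>t)$, the premium is $$\pi(Y)=\int_0^\infty\tilde k(S_Y(t))\,dt.$$ This is the expected value principle with loading $\theta$ plus $\alpha$ times the Gini deviation. The buyer has wealth $w$ and utility $u$ with $u'(x)=e^{-\gamma x}$, $\gamma>0$. She chooses $I\in\mathcal{I}_c$ to maximize $\mathbb{E}[u(w-X+I(X)-\pi(I(X)))]$; the buyer's distortion is the identity. *)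

theory Defs
  imports "HOL-Probability.Probability"
begin

definition Ic :: "(real \<Rightarrow> real) set" where
  "Ic = {I. (\<forall>x\<ge>0. 0 \<le> I x \<and> I x \<le> x) \<and>
            (\<forall>x y. 0 \<le> y \<and> y \<le> x \<longrightarrow> 0 \<le> I x - I y \<and> I x - I y \<le> x - y)}"

text \<open>The premium distortion: expected value principle plus alpha times Gini deviation.\<close>
definition ktilde :: "real \<Rightarrow> real \<Rightarrow> real \<Rightarrow> real" where
  "ktilde \<theta> \<alpha> p = (1 + \<theta>) * p + \<alpha> * (p - p\<^sup>2)"

definition survival :: "'a measure \<Rightarrow> ('a \<Rightarrow> real) \<Rightarrow> real \<Rightarrow> real" where
  "survival M Y t = measure M {\<omega> \<in> space M. Y \<omega> > t}"

definition premium :: "'a measure \<Rightarrow> (real \<Rightarrow> real) \<Rightarrow> ('a \<Rightarrow> real) \<Rightarrow> real" where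
  "premium M k Y = (LINT t:{0..}|lborel. k (survival M Y t))"

text \<open>Expectation with values in the extended reals: E[h] = E[h^+] - E[h^-]
  (may be -\<infinity>, e.g. for unbounded-below utilities).\<close>
definition ext_expectation :: "'a measure \<Rightarrow> ('a \<Rightarrow> real) \<Rightarrow> ereal" where
  "ext_expectation M h =
     enn2ereal (\<integral>\<^sup>+\<omega>. ennreal (max (h \<omega>) 0) \<partial>M) -
     enn2ereal (\<integral>\<^sup>+\<omega>. ennreal (max (- h \<omega>) 0) \<partial>M)"

definition exp_utility ::
  "'a measure \<Rightarrow> (real \<Rightarrow> real) \<Rightarrow> real \<Rightarrow> (real \<Rightarrow> real) \<Rightarrow> ('a \<Rightarrow> real) \<Rightarrow> (real \<Rightarrow> real) \<Rightarrow> ereal"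
  where
  "exp_utility M u w k X I =
     ext_expectation M (\<lambda>\<omega>. u (w - X \<omega> + I (X \<omega>) - premium M k (\<lambda>\<omega>'. I (X \<omega>'))))"

end

theory Submission
  imports Defs
begin

lemma layer:
  fixes X :: "'a \<Rightarrow> real" and g :: "real \<Rightarrow> ennreal"
  assumes P: "prob_space M" and Xm[measurable]: "X \<in> borel_measurable M" and gm[measurable]: "g \<in> borel_measurable borel"
  shows "(\<integral>\<^sup>+\<omega>. (\<integral>\<^sup>+t. g t * indicator {0..<X \<omega>} t \<partial>lborel) \<partial>M)
       = (\<integral>\<^sup>+t. g t * indicator {0..} t * emeasure M {\<omega>\<in>space M. t < X \<omega>} \<partial>lborel)"
proof -
  interpret prob_space M by fact
  interpret pair_sigma_finite lborel M
    by (simp add: pair_sigma_finite_def lborel.sigma_finite_measure_axioms sigma_finite_measure_axioms)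
  have meas: "(\<lambda>(t, \<omega>). g t * indicator {0..<X \<omega>} t) \<in> borel_measurable (lborel \<Otimes>\<^sub>M M)"
  proof -
    have "(\<lambda>(t, \<omega>). g t * indicator {0..<X \<omega>} t) = (\<lambda>p. g (fst p) * (if 0 \<le> fst p \<and> fst p < X (snd p) then 1 else 0))"
      by (auto simp: fun_eq_iff split: split_indicator)
    also have "\<dots> \<in> borel_measurable (lborel \<Otimes>\<^sub>M M)" by measurable
    finally show ?thesis .
  qed
  have "(\<integral>\<^sup>+\<omega>. (\<integral>\<^sup>+t. g t * indicator {0..<X \<omega>} t \<partial>lborel) \<partial>M)
      = (\<integral>\<^sup>+t. (\<integral>\<^sup>+\<omega>. g t * indicator {0..<X \<omega>} t \<partial>M) \<partial>lborel)"
    using Fubini'[OF meas] by simp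
  also have "\<dots> = (\<integral>\<^sup>+t. g t * indicator {0..} t * emeasure M {\<omega>\<in>space M. t < X \<omega>} \<partial>lborel)"
  proof (rule nn_integral_cong)
    fix t :: real
    have "(\<integral>\<^sup>+\<omega>. g t * indicator {0..<X \<omega>} t \<partial>M)
        = (\<integral>\<^sup>+\<omega>. (g t * indicator {0..} t) * indicator {\<omega>\<in>space M. t < X \<omega>} \<omega> \<partial>M)"
      by (rule nn_integral_cong) (auto split: split_indicator)
    also have "\<dots> = g t * indicator {0..} t * emeasure M {\<omega>\<in>space M. t < X \<omega>}"
      by (rule nn_integral_cmult_indicator) measurable
    finally show "(\<integral>\<^sup>+\<omega>. g t * indicator {0..<X \<omega>} t \<partial>M) = g t * indicator {0..} t * emeasure M {\<omega>\<in>space M. t < X \<omega>}" .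
  qed
  finally show ?thesis .
qed

lemma ftc_exp:
  fixes \<gamma> y :: real
  assumes "0 < \<gamma>" "0 \<le> y"
  shows "(\<integral>\<^sup>+t. ennreal (\<gamma> * exp (\<gamma> * t)) * indicator {0..<y} t \<partial>lborel) = ennreal (exp (\<gamma> * y) - 1)"
proof -
  have "(\<integral>\<^sup>+t. ennreal (\<gamma> * exp (\<gamma> * t)) * indicator {0..<y} t \<partial>lborel)
      = (\<integral>\<^sup>+t. ennreal (\<gamma> * exp (\<gamma> * t)) * indicator {0..y} t \<partial>lborel)"
    by (rule nn_integral_cong_AE) (use AE_lborel_singleton[of y] in \<open>auto split: split_indicator\<close>)
  also have "\<dots> = exp (\<gamma> * y) - exp (\<gamma> * 0)"
    by (rule nn_integral_FTC_Icc) (use assms in \<open>auto intro!: derivative_eq_intros\<close>)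
  finally show ?thesis by simp
qed


lemma emeas_X:
  assumes P: "prob_space M" and S: "\<forall>t\<ge>0. survival M X t = q * exp (- lam * t)" and "0 \<le> t"
  shows "emeasure M {\<omega>\<in>space M. t < X \<omega>} = ennreal (q * exp (- lam * t))"
proof -
  interpret prob_space M by fact
  show ?thesis using S assms(3) unfolding survival_def by (simp add: emeasure_eq_measure)
qed

lemma layer_exp:
  fixes X :: "'a \<Rightarrow> real"
  assumes P: "prob_space M" and Xm[measurable]: "X \<in> borel_measurable M" and Xn: "\<forall>\<omega>\<in>space M. X \<omega> \<ge> 0"
    and S: "\<forall>t\<ge>0. survival M X t = q * exp (- lam * t)" and g: "0 < \<gamma>" and q: "0 \<le> q"
    and Dm[measurable]: "D \<in> sets borel" and Dg: "\<And>\<omega>. \<omega> \<in> space M \<Longrightarrow> {0..<X \<omega>} \<inter> D = {0..<Y \<omega>}"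
    and Ym[measurable]: "Y \<in> borel_measurable M" and Yn: "\<forall>\<omega>\<in>space M. Y \<omega> \<ge> 0"
  shows "(\<integral>\<^sup>+\<omega>. ennreal (exp (\<gamma> * Y \<omega>)) \<partial>M)
     = 1 + (\<integral>\<^sup>+t. ennreal (q * \<gamma> * exp ((\<gamma> - lam) * t)) * indicator ({0..} \<inter> D) t \<partial>lborel)"
proof -
  interpret prob_space M by fact
  have "(\<integral>\<^sup>+\<omega>. ennreal (exp (\<gamma> * Y \<omega>)) \<partial>M) = (\<integral>\<^sup>+\<omega>. 1 + ennreal (exp (\<gamma> * Y \<omega>) - 1) \<partial>M)"
  proof (rule nn_integral_cong)
    fix x assume "x \<in> space M"
    then have h: "1 \<le> exp (\<gamma> * Y x)" using Yn g by auto
    have "ennreal (exp (\<gamma> * Y x)) = ennreal (1 + (exp (\<gamma> * Y x) - 1))" by simp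
    also have "\<dots> = ennreal 1 + ennreal (exp (\<gamma> * Y x) - 1)" using h by (intro ennreal_plus) auto
    finally show "ennreal (exp (\<gamma> * Y x)) = 1 + ennreal (exp (\<gamma> * Y x) - 1)" by simp
  qed
  also have "\<dots> = 1 + (\<integral>\<^sup>+\<omega>. ennreal (exp (\<gamma> * Y \<omega>) - 1) \<partial>M)"
    by (subst nn_integral_add) (auto simp: emeasure_space_1)
  also have "(\<integral>\<^sup>+\<omega>. ennreal (exp (\<gamma> * Y \<omega>) - 1) \<partial>M)
     = (\<integral>\<^sup>+\<omega>. (\<integral>\<^sup>+t. (ennreal (\<gamma> * exp (\<gamma> * t)) * indicator D t) * indicator {0..<X \<omega>} t \<partial>lborel) \<partial>M)"
  proof (rule nn_integral_cong)
    fix \<omega> assume w: "\<omega> \<in> space M"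
    have "(\<integral>\<^sup>+t. (ennreal (\<gamma> * exp (\<gamma> * t)) * indicator D t) * indicator {0..<X \<omega>} t \<partial>lborel)
       = (\<integral>\<^sup>+t. ennreal (\<gamma> * exp (\<gamma> * t)) * indicator {0..<Y \<omega>} t \<partial>lborel)"
    proof (rule nn_integral_cong)
      fix t :: real
      have "(ennreal (\<gamma> * exp (\<gamma> * t)) * indicator D t) * indicator {0..<X \<omega>} t
          = ennreal (\<gamma> * exp (\<gamma> * t)) * indicator ({0..<X \<omega>} \<inter> D) t"
        by (auto split: split_indicator)
      then show "(ennreal (\<gamma> * exp (\<gamma> * t)) * indicator D t) * indicator {0..<X \<omega>} t
          = ennreal (\<gamma> * exp (\<gamma> * t)) * indicator {0..<Y \<omega>} t" by (simp only: Dg[OF w])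
    qed
    also have "\<dots> = ennreal (exp (\<gamma> * Y \<omega>) - 1)"
      using ftc_exp[OF g] Yn w by auto
    finally show "ennreal (exp (\<gamma> * Y \<omega>) - 1) = (\<integral>\<^sup>+t. (ennreal (\<gamma> * exp (\<gamma> * t)) * indicator D t) * indicator {0..<X \<omega>} t \<partial>lborel)" by simp
  qed
  also have "\<dots> = (\<integral>\<^sup>+t. (ennreal (\<gamma> * exp (\<gamma> * t)) * indicator D t) * indicator {0..} t * emeasure M {\<omega>\<in>space M. t < X \<omega>} \<partial>lborel)"
    by (rule layer[OF P Xm]) measurable
  also have "\<dots> = (\<integral>\<^sup>+t. ennreal (q * \<gamma> * exp ((\<gamma> - lam) * t)) * indicator ({0..} \<inter> D) t \<partial>lborel)"
  proof (rule nn_integral_cong)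
    fix t :: real
    show "(ennreal (\<gamma> * exp (\<gamma> * t)) * indicator D t) * indicator {0..} t * emeasure M {\<omega>\<in>space M. t < X \<omega>}
        = ennreal (q * \<gamma> * exp ((\<gamma> - lam) * t)) * indicator ({0..} \<inter> D) t"
    proof (cases "0 \<le> t \<and> t \<in> D")
      case True
      then have "emeasure M {\<omega>\<in>space M. t < X \<omega>} = ennreal (q * exp (- lam * t))"
        using emeas_X[OF P S] by auto
      moreover have "exp ((\<gamma> - lam) * t) = exp (\<gamma> * t) * exp (- lam * t)"
        by (simp add: exp_add[symmetric] algebra_simps)
      ultimately have "ennreal (\<gamma> * exp (\<gamma> * t)) * emeasure M {\<omega>\<in>space M. t < X \<omega>}
          = ennreal (q * \<gamma> * exp ((\<gamma> - lam) * t))"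
        using g q by (simp add: ennreal_mult'[symmetric])
      then show ?thesis using True by (simp add: indicator_def)
    next
      case False
      then show ?thesis by (auto simp: indicator_def)
    qed
  qed
  finally show ?thesis .
qed


lemma int_inf:
  fixes a b :: real
  assumes "0 < a" "0 < b"
  shows "(\<integral>\<^sup>+t. ennreal (a * exp (- b * t)) * indicator {0..} t \<partial>lborel) = ennreal (a / b)"
proof -
  have lim: "((\<lambda>t. - a * exp (- b * t) / b) \<longlongrightarrow> 0) at_top"
  proof -
    have "filterlim (\<lambda>t. - b * t) at_bot at_top"
      using assms by (intro filterlim_tendsto_neg_mult_at_bot[OF tendsto_const]) (auto simp: filterlim_ident)
    then have E: "((\<lambda>t. exp (- b * t)) \<longlongrightarrow> 0) at_top"
      by (rule filterlim_compose[OF exp_at_bot])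
    have "((\<lambda>t. - a * exp (- b * t) / b) \<longlongrightarrow> - a * 0 / b) at_top"
      using tendsto_divide[OF tendsto_mult[OF tendsto_const[of "-a"] E] tendsto_const[of b]] assms by simp
    then show ?thesis using assms by simp
  qed
  have "(\<integral>\<^sup>+t. ennreal (a * exp (- b * t)) * indicator {0..} t \<partial>lborel) = 0 - (- a * exp (- b * 0) / b)"
    by (rule nn_integral_FTC_atLeast[OF _ _ _ lim]) (use assms in \<open>auto intro!: derivative_eq_intros\<close>)
  then show ?thesis by simp
qed

lemma int_fin:
  fixes a b d :: real
  assumes "0 < a" "0 < b" "0 \<le> d"
  shows "(\<integral>\<^sup>+t. ennreal (a * exp (- b * t)) * indicator {0..<d} t \<partial>lborel) = ennreal (a * (1 - exp (- b * d)) / b)"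
proof -
  have "(\<integral>\<^sup>+t. ennreal (a * exp (- b * t)) * indicator {0..<d} t \<partial>lborel)
      = (\<integral>\<^sup>+t. ennreal (a * exp (- b * t)) * indicator {0..d} t \<partial>lborel)"
    by (rule nn_integral_cong_AE) (use AE_lborel_singleton[of d] in \<open>auto split: split_indicator\<close>)
  also have "\<dots> = (- a * exp (- b * d) / b) - (- a * exp (- b * 0) / b)"
    by (rule nn_integral_FTC_Icc) (use assms in \<open>auto intro!: derivative_eq_intros\<close>)
  also have "\<dots> = ennreal (a * (1 - exp (- b * d)) / b)"
    by (intro arg_cong[where f=ennreal]) (use assms in \<open>simp add: field_simps\<close>)
  finally show ?thesis .
qed

lemma lborel_Ici_top: "emeasure lborel {0::real..} = \<top>"
proof (rule ccontr)
  assume "emeasure lborel {0::real..} \<noteq> \<top>"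
  then obtain r where r: "emeasure lborel {0::real..} = ennreal r" "r \<ge> 0" by (cases "emeasure lborel {0::real..}" rule: ennreal_cases) auto
  have "emeasure lborel {0..r+1} \<le> emeasure lborel {0::real..}" by (rule emeasure_mono) auto
  then show False using r by simp
qed

lemma int_top:
  fixes a c :: real
  assumes "0 < a" "0 \<le> c"
  shows "(\<integral>\<^sup>+t. ennreal (a * exp (c * t)) * indicator {0..} t \<partial>lborel) = \<top>"
proof -
  have "(\<integral>\<^sup>+(t::real). ennreal a * indicator {0..} t \<partial>lborel) \<le> (\<integral>\<^sup>+t. ennreal (a * exp (c * t)) * indicator {0..} t \<partial>lborel)"
    by (rule nn_integral_mono) (use assms in \<open>auto split: split_indicator intro!: ennreal_leI\<close>)
  moreover have "(\<integral>\<^sup>+(t::real). ennreal a * indicator {0..} t \<partial>lborel) = \<top>"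
    using assms by (simp add: nn_integral_cmult_indicator lborel_Ici_top ennreal_mult_top)
  ultimately show ?thesis by (simp add: top_unique)
qed


lemma premium_zero:
  assumes "prob_space M"
  shows "premium M (ktilde \<theta> \<alpha>) (\<lambda>\<omega>. 0) = 0"
proof -
  have "premium M (ktilde \<theta> \<alpha>) (\<lambda>\<omega>. 0) = (LINT (t::real):{0..}|lborel. (0::real))"
    unfolding premium_def
    by (intro set_lebesgue_integral_cong) (auto simp: survival_def ktilde_def)
  then show ?thesis by simp
qed

lemma premium_bound:
  fixes X :: "'a \<Rightarrow> real"
  assumes P: "prob_space M" and Xm[measurable]: "X \<in> borel_measurable M"
    and S: "\<forall>t\<ge>0. survival M X t = q * exp (- lam * t)"
    and q: "0 < q" "q \<le> 1" and l: "0 < lam" and th: "0 \<le> \<theta>" and al: "0 \<le> \<alpha>" and d: "0 \<le> d"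
  shows "premium M (ktilde \<theta> \<alpha>) (\<lambda>\<omega>. max (X \<omega> - d) 0) \<le> (1 + \<theta> + \<alpha>) * q * exp (- lam * d) / lam"
proof -
  define f where "f = (\<lambda>t. ktilde \<theta> \<alpha> (q * exp (- lam * (t + d))))"
  define a where "a = (1 + \<theta> + \<alpha>) * q * exp (- lam * d)"
  have a: "0 < a" unfolding a_def using q th al by auto
  have "premium M (ktilde \<theta> \<alpha>) (\<lambda>\<omega>. max (X \<omega> - d) 0) = (LINT t:{0..}|lborel. f t)"
    unfolding premium_def
  proof (intro set_lebesgue_integral_cong allI impI)
    fix t :: real assume "t \<in> {0..}"
    then have t: "0 \<le> t" by auto
    have "{\<omega> \<in> space M. max (X \<omega> - d) 0 > t} = {\<omega> \<in> space M. X \<omega> > t + d}"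
      using t by auto
    then have "survival M (\<lambda>\<omega>. max (X \<omega> - d) 0) t = survival M X (t + d)"
      unfolding survival_def by simp
    also have "\<dots> = q * exp (- lam * (t + d))" using S t d by auto
    finally show "ktilde \<theta> \<alpha> (survival M (\<lambda>\<omega>. max (X \<omega> - d) 0) t) = f t"
      unfolding f_def by simp
  qed auto
  also have "\<dots> \<le> a / lam"
  proof -
    define h where "h = (\<lambda>t::real. indicator {0..} t *\<^sub>R f t)"
    have fb: "0 \<le> f t \<and> f t \<le> a * exp (- lam * t)" if "0 \<le> t" for t
    proof -
      define p where "p = q * exp (- lam * (t + d))"
      have p0: "0 \<le> p" unfolding p_def using q by auto
      have "exp (- lam * (t + d)) \<le> 1" using l that d by auto
      then have p1: "p \<le> 1" unfolding p_def using q
        by (metis exp_ge_zero less_eq_real_def mult_le_one)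
      have A0: "f t = (1 + \<theta>) * p + \<alpha> * (p - p\<^sup>2)" unfolding f_def p_def ktilde_def by simp
      have A1: "0 \<le> \<alpha> * (p - p\<^sup>2)" using al p0 p1 by (simp add: power2_eq_square mult_left_le_one_le)
      have A2: "\<alpha> * (p - p\<^sup>2) \<le> \<alpha> * p" using al p0 by (simp add: mult_left_mono)
      have A3: "a * exp (- lam * t) = (1 + \<theta> + \<alpha>) * p"
        unfolding a_def p_def by (simp add: algebra_simps exp_add[symmetric])
      have A4: "0 \<le> (1 + \<theta>) * p" using th p0 by simp
      have A5: "(1 + \<theta> + \<alpha>) * p = (1 + \<theta>) * p + \<alpha> * p" by (simp add: algebra_simps)
      show ?thesis using A0 A1 A2 A3 A4 A5 by linarith
    qed
    have hm[measurable]: "h \<in> borel_measurable lborel" unfolding h_def f_def ktilde_def by measurable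
    have hn: "0 \<le> h t" for t using fb[of t] unfolding h_def by (auto split: split_indicator)
    have "(\<integral>\<^sup>+t. ennreal (h t) \<partial>lborel) \<le> (\<integral>\<^sup>+t. ennreal (a * exp (- lam * t)) * indicator {0..} t \<partial>lborel)"
      by (rule nn_integral_mono) (use fb in \<open>auto simp: h_def split: split_indicator intro!: ennreal_leI\<close>)
    also have "\<dots> = ennreal (a / lam)" by (rule int_inf[OF a l])
    finally have hle: "(\<integral>\<^sup>+t. ennreal (h t) \<partial>lborel) \<le> ennreal (a / lam)" .
    have hi: "integrable lborel h"
    proof (rule integrableI_bounded)
      show "(\<integral>\<^sup>+t. ennreal (norm (h t)) \<partial>lborel) < \<infinity>"
        using hle hn by (simp add: le_less_trans)
    qed simp
    have "ennreal (integral\<^sup>L lborel h) = (\<integral>\<^sup>+t. ennreal (h t) \<partial>lborel)"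
      by (rule nn_integral_eq_integral[symmetric]) (use hi hn in auto)
    with hle have "ennreal (integral\<^sup>L lborel h) \<le> ennreal (a / lam)" by simp
    then have "integral\<^sup>L lborel h \<le> a / lam" using a l by (simp add: ennreal_le_iff)
    then show ?thesis unfolding h_def set_lebesgue_integral_def by simp
  qed
  finally show ?thesis unfolding a_def .
qed


lemma key_ineq:
  fixes q \<gamma> lam c P :: real
  assumes q: "0 < q" and g: "0 < \<gamma>" and gl: "\<gamma> < lam" and c: "1 \<le> c"
    and P: "P \<le> c * q * exp (- lam * ((1 + q * \<gamma> / (lam - \<gamma>)) * c * (lam - \<gamma>) / (lam * \<gamma>))) / lam"
  shows "exp (\<gamma> * P) * (1 + q * \<gamma> / (lam - \<gamma>) * (1 - exp (- (lam - \<gamma>) * ((1 + q * \<gamma> / (lam - \<gamma>)) * c * (lam - \<gamma>) / (lam * \<gamma>)))))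
         < 1 + q * \<gamma> / (lam - \<gamma>)"
proof -
  define \<mu> where "\<mu> = lam - \<gamma>"
  define r where "r = q * \<gamma> / \<mu>"
  define d where "d = (1 + r) * c * \<mu> / (lam * \<gamma>)"
  define s where "s = exp (- \<mu> * d)"
  define E where "E = exp (- \<gamma> * d)"
  define x where "x = \<gamma> * c * q * s * E / lam"
  have mu: "0 < \<mu>" using gl unfolding \<mu>_def by simp
  have l: "0 < lam" using g gl by simp
  have r: "0 < r" unfolding r_def using q g mu by simp
  have d: "0 \<le> d" unfolding d_def using r c mu l g by simp
  have s: "0 < s" "s \<le> 1" unfolding s_def using mu d by auto
  have E: "0 < E" unfolding E_def by simp
  have sE: "exp (- lam * d) = s * E" unfolding s_def E_def \<mu>_def by (simp add: exp_add[symmetric] algebra_simps)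
  have "1 + \<gamma> * d \<le> exp (\<gamma> * d)" by (rule exp_ge_add_one_self)
  then have "\<gamma> * d < exp (\<gamma> * d)" by linarith
  moreover have "\<gamma> * d = (1 + r) * c * \<mu> / lam" unfolding d_def using g l by (simp add: field_simps)
  moreover have "exp (\<gamma> * d) * E = 1" unfolding E_def by (simp add: exp_add[symmetric])
  ultimately have "(1 + r) * c * \<mu> / lam * E < 1"
    using E by (metis mult_strict_right_mono)
  then have h1: "(1 + r) * c * \<mu> * E < lam" using l by (simp add: field_simps)
  have "(1 + r) * x = ((1 + r) * c * \<mu> * E) * (\<gamma> * q * s / (\<mu> * lam))"
    unfolding x_def using mu l by (simp add: field_simps)
  also have "\<dots> < lam * (\<gamma> * q * s / (\<mu> * lam))"
    using h1 g q s mu l by (intro mult_strict_right_mono) auto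
  also have "\<dots> = r * s" unfolding r_def using l mu by (simp add: field_simps)
  finally have h2: "(1 + r) * x < r * s" .
  have x0: "0 \<le> x" unfolding x_def using g c q s E l by simp
  have "r * s \<le> r" using r s by simp
  have x1: "x < 1"
  proof (rule ccontr)
    assume "\<not> x < 1"
    then have "1 + r \<le> (1 + r) * x" using r mult_left_mono[of 1 x "1+r"] by simp
    then show False using h2 \<open>r * s \<le> r\<close> by linarith
  qed
  have "exp (- lam * ((1 + q * \<gamma> / (lam - \<gamma>)) * c * (lam - \<gamma>) / (lam * \<gamma>))) = s * E"
    using sE unfolding d_def r_def \<mu>_def .
  then have "P \<le> c * q * (s * E) / lam" using P by simp
  then have "\<gamma> * P \<le> \<gamma> * (c * q * (s * E) / lam)" using g by (intro mult_left_mono) auto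
  then have "\<gamma> * P \<le> x" unfolding x_def by simp
  then have e1: "exp (\<gamma> * P) \<le> exp x" by simp
  have "1 - x \<le> exp (- x)" using exp_ge_add_one_self[of "-x"] by simp
  then have "exp x * (1 - x) \<le> exp x * exp (- x)" by (simp add: mult_left_mono)
  then have e2: "exp x * (1 - x) \<le> 1" by (simp add: exp_minus)
  have B: "0 < 1 + r * (1 - s)" using r s by (simp add: add_pos_nonneg)
  have "exp (\<gamma> * P) * (1 + r * (1 - s)) \<le> exp x * (1 + r * (1 - s))"
    using e1 B by (simp add: mult_right_mono)
  also have "\<dots> < 1 + r"
  proof -
    have "(1 + r * (1 - s)) < (1 + r) * (1 - x)" using h2 by (simp add: algebra_simps)
    then have "exp x * (1 + r * (1 - s)) < exp x * ((1 + r) * (1 - x))" by simp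
    also have "\<dots> = (1 + r) * (exp x * (1 - x))" by simp
    also have "\<dots> \<le> (1 + r) * 1" using e2 r by (intro mult_left_mono) auto
    finally show ?thesis by simp
  qed
  finally show ?thesis unfolding s_def d_def r_def \<mu>_def by simp
qed


lemma u_form:
  fixes u :: "real \<Rightarrow> real" and \<gamma> :: real
  assumes d: "\<forall>x. (u has_real_derivative exp (- \<gamma> * x)) (at x)" and g: "0 < \<gamma>"
  shows "u x = (u 0 + 1/\<gamma>) - exp (- \<gamma> * x) / \<gamma>"
proof -
  define h where "h = (\<lambda>x. u x + exp (- \<gamma> * x) / \<gamma>)"
  have "\<And>x. DERIV h x :> 0"
  proof -
    fix x
    have "DERIV h x :> exp (- \<gamma> * x) + (exp (- \<gamma> * x) * (- \<gamma>)) / \<gamma>"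
      unfolding h_def using d by (auto intro!: derivative_eq_intros)
    then show "DERIV h x :> 0" using g by simp
  qed
  then have "h x = h 0" by (intro DERIV_isconst_all) auto
  then show ?thesis unfolding h_def by simp
qed

lemma ext_K:
  assumes P: "prob_space M" and gm: "g \<in> borel_measurable M" and gn: "\<forall>\<omega>\<in>space M. g \<omega> \<ge> 0"
  shows "ext_expectation M (\<lambda>\<omega>. K - g \<omega>) = ereal K - enn2ereal (\<integral>\<^sup>+\<omega>. ennreal (g \<omega>) \<partial>M)"
proof -
  interpret prob_space M by fact
  define a where "a = (\<integral>\<^sup>+\<omega>. ennreal (max (K - g \<omega>) 0) \<partial>M)"
  define b where "b = (\<integral>\<^sup>+\<omega>. ennreal (max (- (K - g \<omega>)) 0) \<partial>M)"
  define G where "G = (\<integral>\<^sup>+\<omega>. ennreal (g \<omega>) \<partial>M)"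
  have pw: "\<And>\<omega>. \<omega> \<in> space M \<Longrightarrow> ennreal (max (K - g \<omega>) 0) + ennreal (g \<omega>) + ennreal (max (-K) 0)
       = ennreal (max (- (K - g \<omega>)) 0) + ennreal (max K 0)"
  proof -
    fix \<omega> assume "\<omega> \<in> space M"
    then have "g \<omega> \<ge> 0" using gn by auto
    then have "max (K - g \<omega>) 0 + g \<omega> + max (-K) 0 = max (- (K - g \<omega>)) 0 + max K 0" by auto
    moreover have "\<And>x1 x2 x3 :: real. x1 \<ge> 0 \<Longrightarrow> x2 \<ge> 0 \<Longrightarrow> x3 \<ge> 0 \<Longrightarrow> ennreal x1 + ennreal x2 + ennreal x3 = ennreal (x1+x2+x3)"
      by (simp add: ennreal_plus)
    moreover have "\<And>x1 x2 :: real. x1 \<ge> 0 \<Longrightarrow> x2 \<ge> 0 \<Longrightarrow> ennreal x1 + ennreal x2 = ennreal (x1+x2)"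
      by (simp add: ennreal_plus)
    ultimately show "?thesis \<omega>" using \<open>g \<omega> \<ge> 0\<close> by (metis max.cobounded2)
  qed
  have "(\<integral>\<^sup>+\<omega>. ennreal (max (K - g \<omega>) 0) + ennreal (g \<omega>) + ennreal (max (-K) 0) \<partial>M)
      = (\<integral>\<^sup>+\<omega>. ennreal (max (- (K - g \<omega>)) 0) + ennreal (max K 0) \<partial>M)"
    by (rule nn_integral_cong) (use pw in auto)
  then have eq: "a + G + ennreal (max (-K) 0) = b + ennreal (max K 0)"
    unfolding a_def b_def G_def using gm
    by (simp add: nn_integral_add emeasure_space_1)
  have "a \<le> (\<integral>\<^sup>+\<omega>. ennreal (max K 0) \<partial>M)"
    unfolding a_def by (intro nn_integral_mono ennreal_leI) (use gn in auto)
  then have afin: "a \<le> ennreal (max K 0)" by (simp add: emeasure_space_1)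
  show ?thesis
  proof (cases "G = \<top>")
    case True
    then have "b = \<top>" using eq by (metis ennreal_add_eq_top ennreal_neq_top top_add)
    moreover have "a \<noteq> \<top>" using afin by (auto simp: top_unique)
    ultimately show ?thesis unfolding ext_expectation_def a_def[symmetric] b_def[symmetric] G_def[symmetric]
      using True by (cases a rule: ennreal_cases) auto
  next
    case False
    then obtain gg where gg: "G = ennreal gg" "gg \<ge> 0" by (cases G rule: ennreal_cases) auto
    obtain aa where aa: "a = ennreal aa" "aa \<ge> 0" using afin by (cases a rule: ennreal_cases) (auto simp: top_unique)
    have "b \<noteq> \<top>" using eq gg aa by (metis ennreal_add_eq_top ennreal_neq_top)
    then obtain bb where bb: "b = ennreal bb" "bb \<ge> 0" by (cases b rule: ennreal_cases) auto
    have "ennreal (aa + gg + max (-K) 0) = ennreal (bb + max K 0)"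
      using eq aa gg bb by (simp add: ennreal_plus)
    then have "aa + gg + max (-K) 0 = bb + max K 0"
      using aa gg bb by (subst (asm) ennreal_inj) auto
    then have "aa - bb = K - gg" by auto
    then show ?thesis unfolding ext_expectation_def a_def[symmetric] b_def[symmetric] G_def[symmetric]
      using aa bb gg by simp
  qed
qed

lemma EU:
  fixes X :: "'a \<Rightarrow> real" and I :: "real \<Rightarrow> real"
  assumes P: "prob_space M" and Xm[measurable]: "X \<in> borel_measurable M"
    and ud: "\<forall>x. (u has_real_derivative exp (- \<gamma> * x)) (at x)" and g: "0 < \<gamma>"
    and Im[measurable]: "I \<in> borel_measurable borel"
  shows "exp_utility M u w k X I = ereal (u 0 + 1/\<gamma>) -
     enn2ereal (ennreal (exp (- \<gamma> * (w - premium M k (\<lambda>\<omega>. I (X \<omega>)))) / \<gamma>) *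
                (\<integral>\<^sup>+\<omega>. ennreal (exp (\<gamma> * (X \<omega> - I (X \<omega>)))) \<partial>M))"
proof -
  define Pr where "Pr = premium M k (\<lambda>\<omega>. I (X \<omega>))"
  define C where "C = exp (- \<gamma> * (w - Pr)) / \<gamma>"
  have C: "0 \<le> C" unfolding C_def using g by simp
  have "exp_utility M u w k X I = ext_expectation M (\<lambda>\<omega>. (u 0 + 1/\<gamma>) - C * exp (\<gamma> * (X \<omega> - I (X \<omega>))))"
    unfolding exp_utility_def Pr_def[symmetric]
  proof (intro arg_cong[where f="ext_expectation M"] ext)
    fix \<omega>
    have "exp (- \<gamma> * (w - X \<omega> + I (X \<omega>) - Pr)) = exp (- \<gamma> * (w - Pr) + \<gamma> * (X \<omega> - I (X \<omega>)))"
      by (simp add: algebra_simps)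
    also have "\<dots> = exp (- \<gamma> * (w - Pr)) * exp (\<gamma> * (X \<omega> - I (X \<omega>)))" by (rule exp_add)
    finally show "u (w - X \<omega> + I (X \<omega>) - Pr) = u 0 + 1 / \<gamma> - C * exp (\<gamma> * (X \<omega> - I (X \<omega>)))"
      unfolding C_def by (subst u_form[OF ud g]) simp
  qed
  also have "\<dots> = ereal (u 0 + 1/\<gamma>) - enn2ereal (\<integral>\<^sup>+\<omega>. ennreal (C * exp (\<gamma> * (X \<omega> - I (X \<omega>)))) \<partial>M)"
    by (rule ext_K[OF P]) (use C in auto)
  also have "(\<integral>\<^sup>+\<omega>. ennreal (C * exp (\<gamma> * (X \<omega> - I (X \<omega>)))) \<partial>M)
      = ennreal C * (\<integral>\<^sup>+\<omega>. ennreal (exp (\<gamma> * (X \<omega> - I (X \<omega>)))) \<partial>M)"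
    using C by (simp add: ennreal_mult nn_integral_cmult)
  finally show ?thesis unfolding C_def Pr_def .
qed

lemma cmp:
  fixes A1 A2 :: ennreal
  assumes "A1 < A2"
  shows "ereal K - enn2ereal A2 < ereal K - enn2ereal A1"
proof -
  obtain a1 where a1: "A1 = ennreal a1" "0 \<le> a1"
    using assms by (cases A1 rule: ennreal_cases) (auto simp: top_unique)
  show ?thesis
  proof (cases "A2 = \<top>")
    case True
    then show ?thesis using a1 by simp
  next
    case False
    then obtain a2 where a2: "A2 = ennreal a2" "0 \<le> a2" by (cases A2 rule: ennreal_cases) auto
    then have "a1 < a2" using assms a1 by (simp add: ennreal_less_iff)
    then show ?thesis using a1 a2 by simp
  qed
qed


theorem proposition4p5:
  fixes M :: "'a measure" and X :: "'a \<Rightarrow> real" and u :: "real \<Rightarrow> real"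
    and q lam \<theta> \<alpha> \<gamma> w :: real
  assumes "prob_space M"
    and "X \<in> borel_measurable M"
    and "\<forall>\<omega>\<in>space M. X \<omega> \<ge> 0"
    and "0 < q" and "q \<le> 1" and "0 < lam"
    and "measure M {\<omega> \<in> space M. X \<omega> = 0} = 1 - q"
    and "\<forall>t\<ge>0. survival M X t = q * exp (- lam * t)"
    and "0 \<le> \<theta>" and "0 \<le> \<alpha>" and "0 < \<gamma>"
    and "\<forall>x. (u has_real_derivative exp (- \<gamma> * x)) (at x)"
  shows "\<exists>I\<in>Ic. exp_utility M u w (ktilde \<theta> \<alpha>) X I
                  > exp_utility M u w (ktilde \<theta> \<alpha>) X (\<lambda>x. 0)"
proof -
  note P = assms(1) and Xm[measurable] = assms(2) and Xn = assms(3) and q = assms(4,5) and l = assms(6)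
    and S = assms(8) and th = assms(9) and al = assms(10) and g = assms(11) and ud = assms(12)
  interpret prob_space M by (rule P)
  define C0 where "C0 = exp (- \<gamma> * w) / \<gamma>"
  have C0: "0 < C0" unfolding C0_def using g by simp
  have EU0: "exp_utility M u w (ktilde \<theta> \<alpha>) X (\<lambda>x. 0) = ereal (u 0 + 1/\<gamma>) -
      enn2ereal (ennreal C0 * (\<integral>\<^sup>+\<omega>. ennreal (exp (\<gamma> * X \<omega>)) \<partial>M))"
    using EU[OF P Xm ud g, of "\<lambda>x. 0" w "ktilde \<theta> \<alpha>"] premium_zero[OF P, of \<theta> \<alpha>]
    unfolding C0_def by simp
  have A: "(\<integral>\<^sup>+\<omega>. ennreal (exp (\<gamma> * X \<omega>)) \<partial>M)
     = 1 + (\<integral>\<^sup>+t. ennreal (q * \<gamma> * exp ((\<gamma> - lam) * t)) * indicator {0..} t \<partial>lborel)"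
    using layer_exp[OF P Xm Xn S g _ _ _ Xm Xn, of UNIV] q by simp
  have one_plus: "\<And>x. 0 \<le> x \<Longrightarrow> 1 + ennreal x = ennreal (1 + x)" by (simp add: ennreal_plus)
  show ?thesis
  proof (cases "\<gamma> < lam")
    case False
    have "(\<integral>\<^sup>+t. ennreal (q * \<gamma> * exp ((\<gamma> - lam) * t)) * indicator {0..} t \<partial>lborel) = \<top>"
      by (rule int_top) (use False q g in auto)
    then have EU0': "exp_utility M u w (ktilde \<theta> \<alpha>) X (\<lambda>x. 0) = ereal (u 0 + 1/\<gamma>) - enn2ereal \<top>"
      unfolding EU0 A using C0 by (simp add: ennreal_mult_top)
    have EUid: "exp_utility M u w (ktilde \<theta> \<alpha>) X (\<lambda>x. x) = ereal (u 0 + 1/\<gamma>) -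
      enn2ereal (ennreal (exp (- \<gamma> * (w - premium M (ktilde \<theta> \<alpha>) (\<lambda>\<omega>. X \<omega>))) / \<gamma>) * 1)"
      using EU[OF P Xm ud g, of "\<lambda>x. x" w "ktilde \<theta> \<alpha>"] by (simp add: emeasure_space_1)
    have idIc: "(\<lambda>x::real. x) \<in> Ic" unfolding Ic_def by auto
    show ?thesis
    proof (rule bexI[OF _ idIc])
      show "exp_utility M u w (ktilde \<theta> \<alpha>) X (\<lambda>x. 0) < exp_utility M u w (ktilde \<theta> \<alpha>) X (\<lambda>x. x)"
        unfolding EU0' EUid by (rule cmp) simp
    qed
  next
    case True
    define \<mu> where "\<mu> = lam - \<gamma>"
    define r where "r = q * \<gamma> / \<mu>"
    define c where "c = 1 + \<theta> + \<alpha>"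
    define d where "d = (1 + r) * c * \<mu> / (lam * \<gamma>)"
    have mu: "0 < \<mu>" using True unfolding \<mu>_def by simp
    have r: "0 < r" unfolding r_def using q g mu by simp
    have c: "1 \<le> c" unfolding c_def using th al by simp
    have d: "0 \<le> d" unfolding d_def using r c mu l g by simp
    define I where "I = (\<lambda>x::real. max (x - d) 0)"
    have IIc: "I \<in> Ic" unfolding Ic_def I_def using d by auto
    have Im[measurable]: "I \<in> borel_measurable borel" unfolding I_def by measurable
    have A': "(\<integral>\<^sup>+\<omega>. ennreal (exp (\<gamma> * X \<omega>)) \<partial>M) = ennreal (1 + r)"
    proof -
      have "(\<integral>\<^sup>+t. ennreal (q * \<gamma> * exp ((\<gamma> - lam) * t)) * indicator {0..} t \<partial>lborel)
          = (\<integral>\<^sup>+t. ennreal (q * \<gamma> * exp (- \<mu> * t)) * indicator {0..} t \<partial>lborel)"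
        unfolding \<mu>_def by (simp add: algebra_simps)
      also have "\<dots> = ennreal (q * \<gamma> / \<mu>)" by (rule int_inf) (use q g mu in auto)
      finally have F: "(\<integral>\<^sup>+t. ennreal (q * \<gamma> * exp ((\<gamma> - lam) * t)) * indicator {0..} t \<partial>lborel) = ennreal (q * \<gamma> / \<mu>)" .
      have "0 \<le> q * \<gamma> / \<mu>" using q g mu by simp
      then show ?thesis unfolding A F r_def by (rule one_plus)
    qed
    have B': "(\<integral>\<^sup>+\<omega>. ennreal (exp (\<gamma> * (X \<omega> - I (X \<omega>)))) \<partial>M) = ennreal (1 + r * (1 - exp (- \<mu> * d)))"
    proof -
      have "(\<integral>\<^sup>+\<omega>. ennreal (exp (\<gamma> * (X \<omega> - I (X \<omega>)))) \<partial>M) = (\<integral>\<^sup>+\<omega>. ennreal (exp (\<gamma> * min (X \<omega>) d)) \<partial>M)"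
        unfolding I_def by (intro nn_integral_cong) (auto simp: min_def max_def)
      also have "\<dots> = 1 + (\<integral>\<^sup>+t. ennreal (q * \<gamma> * exp ((\<gamma> - lam) * t)) * indicator ({0..} \<inter> {..<d}) t \<partial>lborel)"
        by (rule layer_exp[OF P Xm Xn S g]) (use q Xn d in auto)
      also have "(\<integral>\<^sup>+t. ennreal (q * \<gamma> * exp ((\<gamma> - lam) * t)) * indicator ({0..} \<inter> {..<d}) t \<partial>lborel)
          = (\<integral>\<^sup>+t. ennreal (q * \<gamma> * exp (- \<mu> * t)) * indicator {0..<d} t \<partial>lborel)"
        unfolding \<mu>_def by (intro nn_integral_cong) (auto simp: algebra_simps split: split_indicator)
      also have "\<dots> = ennreal (q * \<gamma> * (1 - exp (- \<mu> * d)) / \<mu>)" by (rule int_fin) (use q g mu d in auto)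
      also have "q * \<gamma> * (1 - exp (- \<mu> * d)) / \<mu> = r * (1 - exp (- \<mu> * d))" unfolding r_def by simp
      also have "1 + ennreal (r * (1 - exp (- \<mu> * d))) = ennreal (1 + r * (1 - exp (- \<mu> * d)))"
        using r mu d by (intro one_plus) simp
      finally show ?thesis .
    qed
    define Pr where "Pr = premium M (ktilde \<theta> \<alpha>) (\<lambda>\<omega>. I (X \<omega>))"
    have Prb: "Pr \<le> c * q * exp (- lam * d) / lam"
      unfolding Pr_def I_def c_def using premium_bound[OF P Xm S q l th al d] by simp
    have kk: "exp (\<gamma> * Pr) * (1 + r * (1 - exp (- \<mu> * d))) < 1 + r"
      using key_ineq[OF q(1) g True c, of Pr] Prb unfolding r_def d_def \<mu>_def by simp
    have EUI: "exp_utility M u w (ktilde \<theta> \<alpha>) X I = ereal (u 0 + 1/\<gamma>) -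
      enn2ereal (ennreal (exp (- \<gamma> * (w - Pr)) / \<gamma>) * ennreal (1 + r * (1 - exp (- \<mu> * d))))"
      using EU[OF P Xm ud g Im, of w "ktilde \<theta> \<alpha>"] B' unfolding Pr_def by simp
    have B0: "0 \<le> 1 + r * (1 - exp (- \<mu> * d))" using r mu d by (simp add: add_nonneg_nonneg)
    have "exp (- \<gamma> * (w - Pr)) / \<gamma> = C0 * exp (\<gamma> * Pr)"
      unfolding C0_def by (simp add: exp_add[symmetric] algebra_simps)
    then have "exp (- \<gamma> * (w - Pr)) / \<gamma> * (1 + r * (1 - exp (- \<mu> * d))) = C0 * (exp (\<gamma> * Pr) * (1 + r * (1 - exp (- \<mu> * d))))"
      by simp
    also have "\<dots> < C0 * (1 + r)" using kk C0 by simp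
    finally have lt: "exp (- \<gamma> * (w - Pr)) / \<gamma> * (1 + r * (1 - exp (- \<mu> * d))) < C0 * (1 + r)" .
    have "ennreal (exp (- \<gamma> * (w - Pr)) / \<gamma>) * ennreal (1 + r * (1 - exp (- \<mu> * d)))
        < ennreal C0 * ennreal (1 + r)"
    proof -
      have "ennreal (exp (- \<gamma> * (w - Pr)) / \<gamma>) * ennreal (1 + r * (1 - exp (- \<mu> * d)))
          = ennreal (exp (- \<gamma> * (w - Pr)) / \<gamma> * (1 + r * (1 - exp (- \<mu> * d))))"
        by (rule ennreal_mult[symmetric]) (use g B0 in auto)
      also have "\<dots> < ennreal (C0 * (1 + r))"
        by (rule ennreal_lessI) (use lt C0 r in auto)
      also have "\<dots> = ennreal C0 * ennreal (1 + r)"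
        by (rule ennreal_mult) (use C0 r in auto)
      finally show ?thesis .
    qed
    then have "exp_utility M u w (ktilde \<theta> \<alpha>) X (\<lambda>x. 0) < exp_utility M u w (ktilde \<theta> \<alpha>) X I"
      unfolding EU0 EUI A' by (rule cmp)
    then show ?thesis using IIc by blast
  qed
qed

end
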